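(* Let $(X,d)$ be a Polish metric space, $1\le p<\infty$, and $\{m_x\}_{x\in X}$ a random walk with $m_x\in\mathcal{P}_p(X)$. Let $\nu$ be an invariant distribution for $\{m_x\}$. Then $\tilde m_\nu$ is an invariant distribution for the random walk $\{\tilde m_\mu\}_{\mu\in\mathcal{P}_p(X)}$ on $\mathcal{P}_p(X)$. Moreover, if $\nu$ is reversible for $\{m_x\}$, then $\tilde m_\nu$ is reversible for $\{\tilde m_\mu\}$.
   Context: A random walk on a metric space $Y$ is a family $\{m_y\}_{y\in Y}$ of Borel probability measures on $Y$. $\mathcal{P}_p(X)$ is the space of Borel probability measures on $X$ with finite $p$-th moment, with the $L^p$-Wasserstein metric. $\tilde m_\mu\in\mathcal{P}(\mathcal{P}_p(X))$ is defined by $\int f(\sigma)\,\tilde m_\mu(d\sigma)=\int_X f(m_x)\,\mu(dx)$ for bounded continuous $f$ on $\mathcal{P}_p(X)$ (push-forward of $\mu$ under $x\mapsto m_x$). For a random walk $m$ on $Y$ and $\mu\in\mathcal{P}(Y)$, $\mu\ast m(A)=\int_Y m_y(A)\,\mu(dy)$. A measure $\nu$ is invariant if $\nu\ast m=\nu$, and reversible if $m_x(dy)\nu(dx)=m_y(dx)\nu(dy)$ as measures on $Y\times Y$. *)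

theory Defs
  imports "HOL-Analysis.Analysis" "HOL-Probability.Probability"
begin

definition Pp :: "real \<Rightarrow> 'a::metric_space measure set" where
  "Pp p = {\<mu>. sets \<mu> = sets borel \<and> prob_space \<mu> \<and>
              (\<exists>x0. (\<integral>\<^sup>+ y. ennreal (dist x0 y powr p) \<partial>\<mu>) < \<infinity>)}"

definition couplings :: "'a::metric_space measure \<Rightarrow> 'a measure \<Rightarrow> ('a \<times> 'a) measure set" where
  "couplings \<mu> \<nu> = {\<pi>. sets \<pi> = sets (borel \<Otimes>\<^sub>M borel) \<and> prob_space \<pi> \<and>
                        distr \<pi> borel fst = \<mu> \<and> distr \<pi> borel snd = \<nu>}"

definition wasserstein :: "real \<Rightarrow> 'a::metric_space measure \<Rightarrow> 'a measure \<Rightarrow> real" where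
  "wasserstein p \<mu> \<nu> =
     enn2real (INF \<pi> \<in> couplings \<mu> \<nu>. \<integral>\<^sup>+ z. ennreal (dist (fst z) (snd z) powr p) \<partial>\<pi>) powr (1 / p)"

definition W_open :: "real \<Rightarrow> 'a::metric_space measure set \<Rightarrow> bool" where
  "W_open p U \<longleftrightarrow> U \<subseteq> Pp p \<and>
     (\<forall>\<mu>\<in>U. \<exists>e>0. \<forall>\<nu>\<in>Pp p. wasserstein p \<mu> \<nu> < e \<longrightarrow> \<nu> \<in> U)"

definition PpM :: "real \<Rightarrow> 'a::metric_space measure measure" where
  "PpM p = sigma (Pp p) {U. W_open p U}"

definition lift_walk :: "real \<Rightarrow> ('a::metric_space \<Rightarrow> 'a measure) \<Rightarrow> 'a measure \<Rightarrow> 'a measure measure" where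
  "lift_walk p m \<mu> = distr \<mu> (PpM p) m"

definition invariant_dist :: "'b measure \<Rightarrow> ('b \<Rightarrow> 'b measure) \<Rightarrow> 'b measure \<Rightarrow> bool" where
  "invariant_dist M m \<nu> \<longleftrightarrow> prob_space \<nu> \<and> sets \<nu> = sets M \<and>
     (\<forall>A\<in>sets M. (\<integral>\<^sup>+ y. emeasure (m y) A \<partial>\<nu>) = emeasure \<nu> A)"

definition reversible :: "'b measure \<Rightarrow> ('b \<Rightarrow> 'b measure) \<Rightarrow> 'b measure \<Rightarrow> bool" where
  "reversible M m \<nu> \<longleftrightarrow>
     (\<forall>C\<in>sets (M \<Otimes>\<^sub>M M).
        (\<integral>\<^sup>+ x. emeasure (m x) {y. (x, y) \<in> C} \<partial>\<nu>) =
        (\<integral>\<^sup>+ y. emeasure (m y) {x. (x, y) \<in> C} \<partial>\<nu>))"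

end

theory Submission
  imports Defs
begin

lemma coupling_fst_int:
  assumes "\<pi> \<in> couplings \<sigma> \<tau>" and f: "f \<in> borel_measurable borel"
  shows "(\<integral>\<^sup>+ z. f (fst z) \<partial>\<pi>) = (\<integral>\<^sup>+ x. f x \<partial>\<sigma>)"
proof -
  have s: "sets \<pi> = sets (borel \<Otimes>\<^sub>M borel)" and d: "distr \<pi> borel fst = \<sigma>"
    using assms by (auto simp: couplings_def)
  have fm: "fst \<in> measurable \<pi> borel"
    using measurable_cong_sets[OF s refl] measurable_fst by blast
  have "(\<integral>\<^sup>+ x. f x \<partial>\<sigma>) = (\<integral>\<^sup>+ x. f x \<partial>distr \<pi> borel fst)" using d by simp
  also have "\<dots> = (\<integral>\<^sup>+ z. f (fst z) \<partial>\<pi>)" using nn_integral_distr[OF fm, of f] f measurable_cong_sets[OF sets_distr refl, of \<pi> borel fst borel] by (simp add: o_def)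
  finally show ?thesis ..
qed

lemma coupling_snd_int:
  assumes "\<pi> \<in> couplings \<sigma> \<tau>" and f: "f \<in> borel_measurable borel"
  shows "(\<integral>\<^sup>+ z. f (snd z) \<partial>\<pi>) = (\<integral>\<^sup>+ x. f x \<partial>\<tau>)"
proof -
  have s: "sets \<pi> = sets (borel \<Otimes>\<^sub>M borel)" and d: "distr \<pi> borel snd = \<tau>"
    using assms by (auto simp: couplings_def)
  have fm: "snd \<in> measurable \<pi> borel"
    using measurable_cong_sets[OF s refl] measurable_snd by blast
  have "(\<integral>\<^sup>+ x. f x \<partial>\<tau>) = (\<integral>\<^sup>+ x. f x \<partial>distr \<pi> borel snd)" using d by simp
  also have "\<dots> = (\<integral>\<^sup>+ z. f (snd z) \<partial>\<pi>)" using nn_integral_distr[OF fm, of f] f measurable_cong_sets[OF sets_distr refl, of \<pi> borel snd borel] by (simp add: o_def)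
  finally show ?thesis ..
qed

lemma dist_powr_bound:
  fixes x y x0 x1 :: "'a::metric_space"
  assumes p: "0 \<le> p"
  shows "dist x y powr p \<le> 3 powr p * (dist x0 x powr p + dist x0 x1 powr p + dist x1 y powr p)"
proof -
  define a where "a = dist x0 x"
  define b where "b = dist x0 x1"
  define c where "c = dist x1 y"
  have a0: "a \<ge> 0" "b \<ge> 0" "c \<ge> 0" unfolding a_def b_def c_def by auto
  define M where "M = max a (max b c)"
  have t1: "dist x y \<le> dist x x0 + dist x0 y" by (rule dist_triangle)
  have t2: "dist x0 y \<le> dist x0 x1 + dist x1 y" by (rule dist_triangle)
  have t3: "dist x x0 = dist x0 x" by (rule dist_commute)
  have "dist x y \<le> a + b + c" unfolding a_def b_def c_def using t1 t2 t3 by linarith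
  also have "\<dots> \<le> 3 * M" unfolding M_def by linarith
  finally have "dist x y powr p \<le> (3 * M) powr p" using p by (simp add: powr_mono2)
  also have "\<dots> = 3 powr p * M powr p" using a0 unfolding M_def
    by (simp add: powr_mult)
  also have "M powr p \<le> a powr p + b powr p + c powr p"
  proof -
    have "M = a \<or> M = b \<or> M = c" unfolding M_def by linarith
    moreover have "a powr p \<ge> 0" "b powr p \<ge> 0" "c powr p \<ge> 0" by auto
    ultimately show ?thesis by auto
  qed
  hence "3 powr p * M powr p \<le> 3 powr p * (a powr p + b powr p + c powr p)" by simp
  finally show ?thesis unfolding a_def b_def c_def .
qed

lemma prod_coupling:
  fixes \<sigma> \<tau> :: "'a::metric_space measure"
  assumes "sets \<sigma> = sets borel" "sets \<tau> = sets borel" "prob_space \<sigma>" "prob_space \<tau>"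
  shows "\<sigma> \<Otimes>\<^sub>M \<tau> \<in> couplings \<sigma> \<tau>"
proof -
  interpret ps: prob_space \<sigma> by fact
  interpret pt: prob_space \<tau> by fact
  have sp: "space \<sigma> = UNIV" "space \<tau> = UNIV"
    using sets_eq_imp_space_eq[OF assms(1)] sets_eq_imp_space_eq[OF assms(2)] by simp_all
  have s: "sets (\<sigma> \<Otimes>\<^sub>M \<tau>) = sets (borel \<Otimes>\<^sub>M borel)"
    by (rule sets_pair_measure_cong[OF assms(1,2)])
  have mc: "measurable (\<sigma> \<Otimes>\<^sub>M \<tau>) borel = measurable (borel \<Otimes>\<^sub>M borel) borel"
    by (rule measurable_cong_sets[OF s refl])
  have mf: "fst \<in> measurable (\<sigma> \<Otimes>\<^sub>M \<tau>) borel" unfolding mc by (rule measurable_fst)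
  have ms: "snd \<in> measurable (\<sigma> \<Otimes>\<^sub>M \<tau>) borel" unfolding mc by (rule measurable_snd)
  have "distr (\<sigma> \<Otimes>\<^sub>M \<tau>) borel fst = \<sigma>"
  proof (rule measure_eqI)
    show "sets (distr (\<sigma> \<Otimes>\<^sub>M \<tau>) borel fst) = sets \<sigma>" using assms(1) by simp
    fix A assume A: "A \<in> sets (distr (\<sigma> \<Otimes>\<^sub>M \<tau>) borel fst)"
    hence Ab: "A \<in> sets borel" by simp
    hence As: "A \<in> sets \<sigma>" using assms(1) by simp
    have e: "fst -` A \<inter> space (\<sigma> \<Otimes>\<^sub>M \<tau>) = A \<times> space \<tau>" by (auto simp: space_pair_measure sp)
    have "emeasure (distr (\<sigma> \<Otimes>\<^sub>M \<tau>) borel fst) A = emeasure (\<sigma> \<Otimes>\<^sub>M \<tau>) (A \<times> space \<tau>)"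
      using emeasure_distr[OF mf Ab] e by simp
    also have "\<dots> = emeasure \<sigma> A * emeasure \<tau> (space \<tau>)"
      using pt.emeasure_pair_measure_Times[OF As, of "space \<tau>"] by simp
    finally show "emeasure (distr (\<sigma> \<Otimes>\<^sub>M \<tau>) borel fst) A = emeasure \<sigma> A"
      using pt.emeasure_space_1 by simp
  qed
  moreover have "distr (\<sigma> \<Otimes>\<^sub>M \<tau>) borel snd = \<tau>"
  proof (rule measure_eqI)
    show "sets (distr (\<sigma> \<Otimes>\<^sub>M \<tau>) borel snd) = sets \<tau>" using assms(2) by simp
    fix A assume A: "A \<in> sets (distr (\<sigma> \<Otimes>\<^sub>M \<tau>) borel snd)"
    hence Ab: "A \<in> sets borel" by simp
    hence As: "A \<in> sets \<tau>" using assms(2) by simp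
    have e: "snd -` A \<inter> space (\<sigma> \<Otimes>\<^sub>M \<tau>) = space \<sigma> \<times> A" by (auto simp: space_pair_measure sp)
    have "emeasure (distr (\<sigma> \<Otimes>\<^sub>M \<tau>) borel snd) A = emeasure (\<sigma> \<Otimes>\<^sub>M \<tau>) (space \<sigma> \<times> A)"
      using emeasure_distr[OF ms Ab] e by simp
    also have "\<dots> = emeasure \<sigma> (space \<sigma>) * emeasure \<tau> A"
      using pt.emeasure_pair_measure_Times[OF _ As, of "space \<sigma>" \<sigma>] by simp
    finally show "emeasure (distr (\<sigma> \<Otimes>\<^sub>M \<tau>) borel snd) A = emeasure \<tau> A"
      using ps.emeasure_space_1 by simp
  qed
  ultimately show ?thesis using s prob_space_pair[OF assms(3,4)] unfolding couplings_def by simp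
qed

lemma prod_cost_finite:
  fixes \<sigma> \<tau> :: "'a::polish_space measure"
  assumes p: "1 \<le> p" and s: "\<sigma> \<in> Pp p" and t: "\<tau> \<in> Pp p"
  shows "(\<integral>\<^sup>+ z. ennreal (dist (fst z) (snd z) powr p) \<partial>(\<sigma> \<Otimes>\<^sub>M \<tau>)) < \<infinity>"
proof -
  obtain x0 where x0: "(\<integral>\<^sup>+ y. ennreal (dist x0 y powr p) \<partial>\<sigma>) < \<infinity>" and
    ss: "sets \<sigma> = sets borel" "prob_space \<sigma>" using s by (auto simp: Pp_def)
  obtain x1 where x1: "(\<integral>\<^sup>+ y. ennreal (dist x1 y powr p) \<partial>\<tau>) < \<infinity>" and
    ts: "sets \<tau> = sets borel" "prob_space \<tau>" using t by (auto simp: Pp_def)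
  define \<pi> where "\<pi> = \<sigma> \<Otimes>\<^sub>M \<tau>"
  have c: "\<pi> \<in> couplings \<sigma> \<tau>" unfolding \<pi>_def using prod_coupling ss ts by blast
  hence sp: "sets \<pi> = sets (borel \<Otimes>\<^sub>M borel)" and pp: "prob_space \<pi>" by (auto simp: couplings_def)
  have mc: "measurable \<pi> borel = measurable (borel \<Otimes>\<^sub>M borel) borel"
    using measurable_cong_sets[OF sp refl] .
  define B where "B = dist x0 x1 powr p"
  have "(\<integral>\<^sup>+ z. ennreal (dist (fst z) (snd z) powr p) \<partial>\<pi>) \<le>
        (\<integral>\<^sup>+ z. ennreal (3 powr p) * (ennreal (dist x0 (fst z) powr p) + ennreal B + ennreal (dist x1 (snd z) powr p)) \<partial>\<pi>)"
  proof (rule nn_integral_mono)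
    fix z :: "'a \<times> 'a"
    have "dist (fst z) (snd z) powr p \<le> 3 powr p * (dist x0 (fst z) powr p + B + dist x1 (snd z) powr p)"
      unfolding B_def using dist_powr_bound[of p "fst z" "snd z" x0 x1] p by simp
    thus "ennreal (dist (fst z) (snd z) powr p) \<le> ennreal (3 powr p) * (ennreal (dist x0 (fst z) powr p) + ennreal B + ennreal (dist x1 (snd z) powr p))"
      by (simp add: B_def ennreal_mult'[symmetric] ennreal_plus[symmetric] del: ennreal_plus)
  qed
  also have "\<dots> = ennreal (3 powr p) * ((\<integral>\<^sup>+ z. ennreal (dist x0 (fst z) powr p) \<partial>\<pi>) + (\<integral>\<^sup>+ z. ennreal B \<partial>\<pi>) + (\<integral>\<^sup>+ z. ennreal (dist x1 (snd z) powr p) \<partial>\<pi>))"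
  proof -
    have m1: "(\<lambda>z. ennreal (dist x0 (fst z) powr p)) \<in> borel_measurable \<pi>" unfolding mc by measurable
    have m2: "(\<lambda>z. ennreal (dist x1 (snd z) powr p)) \<in> borel_measurable \<pi>" unfolding mc by measurable
    have m3: "(\<lambda>z. ennreal B) \<in> borel_measurable \<pi>" by simp
    show ?thesis
      apply (subst nn_integral_cmult)
       apply (intro borel_measurable_add m1 m2 m3)
      apply (subst nn_integral_add, intro borel_measurable_add m1 m2 m3, rule m2)
      apply (subst nn_integral_add, rule m1, rule m3)
      by simp
  qed
  also have "\<dots> = ennreal (3 powr p) * ((\<integral>\<^sup>+ y. ennreal (dist x0 y powr p) \<partial>\<sigma>) + ennreal B + (\<integral>\<^sup>+ y. ennreal (dist x1 y powr p) \<partial>\<tau>))"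
    using coupling_fst_int[OF c, of "\<lambda>y. ennreal (dist x0 y powr p)"]
      coupling_snd_int[OF c, of "\<lambda>y. ennreal (dist x1 y powr p)"]
      prob_space.emeasure_space_1[OF pp]
    by simp
  also have "\<dots> < \<infinity>" using x0 x1 by (simp add: ennreal_mult_less_top)
  finally show ?thesis unfolding \<pi>_def .
qed

lemma lsc:
  fixes U :: "'a::polish_space set"
  assumes U: "open U" and p: "1 \<le> p" and s: "\<sigma> \<in> Pp p" and a: "a < measure \<sigma> U"
  shows "\<exists>e>0. \<forall>\<tau>\<in>Pp p. wasserstein p \<sigma> \<tau> < e \<longrightarrow> a < measure \<tau> U"
proof (cases "a < 0")
  case True
  thus ?thesis by (intro exI[of _ 1]) (auto intro: less_le_trans)
next
  case False
  hence a0: "0 \<le> a" by simp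
  have ss: "sets \<sigma> = sets borel" and ps: "prob_space \<sigma>" using s by (auto simp: Pp_def)
  interpret ps: prob_space \<sigma> by fact
  define V where "V n = {x. \<forall>y\<in>-U. 1 / real (Suc n) \<le> dist x y}" for n
  have Vc: "V n = (\<Inter>y\<in>-U. {x. 1 / real (Suc n) \<le> dist x y})" for n
    unfolding V_def by auto
  have Vclosed: "closed (V n)" for n unfolding Vc
    by (intro closed_INT ballI closed_Collect_le continuous_intros)
  hence Vsets: "V n \<in> sets \<sigma>" for n using ss by (simp add: borel_closed)
  have Vinc: "incseq V"
  proof (rule incseq_SucI)
    fix n
    have "1 / real (Suc (Suc n)) \<le> 1 / real (Suc n)" by (simp add: frac_le)
    thus "V n \<subseteq> V (Suc n)" unfolding V_def by (auto intro: order_trans)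
  qed
  have VU: "(\<Union>n. V n) = U"
  proof
    show "(\<Union>n. V n) \<subseteq> U"
    proof
      fix x assume "x \<in> (\<Union>n. V n)"
      then obtain n where "x \<in> V n" by auto
      show "x \<in> U"
      proof (rule ccontr)
        assume "x \<notin> U"
        hence "1 / real (Suc n) \<le> dist x x" using \<open>x \<in> V n\<close> unfolding V_def by blast
        thus False by simp
      qed
    qed
  next
    show "U \<subseteq> (\<Union>n. V n)"
    proof
      fix x assume "x \<in> U"
      then obtain r where r: "r > 0" "ball x r \<subseteq> U" using U openE by blast
      obtain n where n: "1 / real (Suc n) < r" using r(1) nat_approx_posE by blast
      have "x \<in> V n" unfolding V_def
      proof (intro CollectI ballI)
        fix y assume "y \<in> -U"
        hence "\<not> dist x y < r" using r(2) by auto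
        thus "1 / real (Suc n) \<le> dist x y" using n by linarith
      qed
      thus "x \<in> (\<Union>n. V n)" by auto
    qed
  qed
  have "(SUP n. emeasure \<sigma> (V n)) = emeasure \<sigma> U"
    using SUP_emeasure_incseq[of V \<sigma>] Vsets Vinc VU by auto
  moreover have "ennreal a < emeasure \<sigma> U" using a a0 by (simp add: ps.emeasure_eq_measure ennreal_less_iff)
  ultimately obtain n where "ennreal a < emeasure \<sigma> (V n)" by (metis less_SUP_iff)
  hence an: "a < measure \<sigma> (V n)" using a0 by (simp add: ps.emeasure_eq_measure ennreal_less_iff)
  define \<delta> where "\<delta> = 1 / real (Suc n)"
  have d0: "\<delta> > 0" unfolding \<delta>_def by simp
  define \<eta> where "\<eta> = measure \<sigma> (V n) - a"
  have e0: "\<eta> > 0" using an unfolding \<eta>_def by simp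
  define c where "c = \<eta> * \<delta> powr p"
  have c0: "c > 0" unfolding c_def using e0 d0 by simp
  show ?thesis
  proof (intro exI[of _ "c powr (1/p)"] conjI ballI impI)
    show "c powr (1/p) > 0" using c0 by simp
    fix \<tau> assume t: "\<tau> \<in> Pp p" and W: "wasserstein p \<sigma> \<tau> < c powr (1 / p)"
    have ts: "sets \<tau> = sets borel" and pt: "prob_space \<tau>" using t by (auto simp: Pp_def)
    define cost where "cost \<pi> = (\<integral>\<^sup>+ z. ennreal (dist (fst z) (snd z) powr p) \<partial>\<pi>)" for \<pi> :: "('a \<times> 'a) measure"
    define I where "I = (INF \<pi> \<in> couplings \<sigma> \<tau>. cost \<pi>)"
    have "I \<le> cost (\<sigma> \<Otimes>\<^sub>M \<tau>)" unfolding I_def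
      using prod_coupling[OF ss ts ps pt] by (rule INF_lower)
    also have "\<dots> < \<infinity>" unfolding cost_def using prod_cost_finite[OF p s t] .
    finally have Ifin: "I < \<infinity>" .
    have "enn2real I < c"
    proof (rule ccontr)
      assume "\<not> enn2real I < c"
      hence "c powr (1/p) \<le> enn2real I powr (1/p)" using c0 p by (intro powr_mono2) auto
      thus False using W unfolding wasserstein_def I_def cost_def by simp
    qed
    hence "I < ennreal c" using Ifin c0
      by (cases I rule: ennreal_cases) (auto simp: ennreal_less_iff)
    then obtain \<pi> where pc: "\<pi> \<in> couplings \<sigma> \<tau>" and pcost: "cost \<pi> < ennreal c"
      unfolding I_def by (auto simp: INF_less_iff)
    have sp: "sets \<pi> = sets (borel \<Otimes>\<^sub>M borel)" and pp: "prob_space \<pi>"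
      and df: "distr \<pi> borel fst = \<sigma>" and ds: "distr \<pi> borel snd = \<tau>"
      using pc by (auto simp: couplings_def)
    interpret pp: prob_space \<pi> by fact
    have spp: "space \<pi> = UNIV" using sets_eq_imp_space_eq[OF sp] by (simp add: space_pair_measure)
    have mc: "measurable \<pi> borel = measurable (borel \<Otimes>\<^sub>M borel) borel"
      using measurable_cong_sets[OF sp refl] .
    define S where "S = {z :: 'a \<times> 'a. \<delta> \<le> dist (fst z) (snd z)}"
    have Ssets: "S \<in> sets \<pi>"
    proof -
      have "(\<lambda>z::'a\<times>'a. dist (fst z) (snd z)) \<in> borel_measurable \<pi>" unfolding mc by measurable
      hence "{z \<in> space \<pi>. \<delta> \<le> dist (fst z) (snd z)} \<in> sets \<pi>" by measurable
      thus ?thesis unfolding S_def spp by simp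
    qed
    have "ennreal (\<delta> powr p) * emeasure \<pi> S = (\<integral>\<^sup>+ z. ennreal (\<delta> powr p) * indicator S z \<partial>\<pi>)"
      using Ssets by (simp add: nn_integral_cmult_indicator)
    also have "\<dots> \<le> cost \<pi>" unfolding cost_def
    proof (rule nn_integral_mono)
      fix z :: "'a \<times> 'a"
      show "ennreal (\<delta> powr p) * indicator S z \<le> ennreal (dist (fst z) (snd z) powr p)"
      proof (cases "z \<in> S")
        case True
        hence "\<delta> powr p \<le> dist (fst z) (snd z) powr p" using d0 p unfolding S_def by (intro powr_mono2) auto
        thus ?thesis using True by simp
      qed simp
    qed
    finally have "ennreal (\<delta> powr p * measure \<pi> S) < ennreal c"
      using pcost by (simp add: pp.emeasure_eq_measure ennreal_mult'')
    hence "\<delta> powr p * measure \<pi> S < \<eta> * \<delta> powr p" unfolding c_def using c0 c_def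
      by (simp add: ennreal_less_iff)
    hence mS: "measure \<pi> S < \<eta>" using d0 by (simp add: mult.commute)
    have "measure \<sigma> (V n) = measure \<pi> (V n \<times> UNIV)"
    proof -
      have "measure \<sigma> (V n) = measure (distr \<pi> borel fst) (V n)" using df by simp
      also have "\<dots> = measure \<pi> (fst -` V n \<inter> space \<pi>)"
        using Vsets ss by (intro measure_distr) (auto simp: mc)
      also have "fst -` V n \<inter> space \<pi> = V n \<times> UNIV" using spp by auto
      finally show ?thesis .
    qed
    also have "\<dots> \<le> measure \<pi> ((UNIV \<times> U) \<union> S)"
    proof (rule pp.finite_measure_mono)
      show "V n \<times> UNIV \<subseteq> UNIV \<times> U \<union> S"
      proof
        fix z assume "z \<in> V n \<times> (UNIV :: 'a set)"
        hence z: "fst z \<in> V n" by auto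
        show "z \<in> UNIV \<times> U \<union> S"
        proof (cases "snd z \<in> U")
          case True then show ?thesis by (cases z) auto
        next
          case False
          hence "\<delta> \<le> dist (fst z) (snd z)" using z unfolding V_def \<delta>_def by auto
          thus ?thesis by (simp add: S_def)
        qed
      qed
      have "UNIV \<times> U \<in> sets \<pi>" unfolding sp using U by (simp add: borel_open)
      thus "UNIV \<times> U \<union> S \<in> sets \<pi>" using Ssets by simp
    qed
    also have "\<dots> \<le> measure \<pi> (UNIV \<times> U) + measure \<pi> S"
      by (rule measure_subadditive) (use U Ssets in \<open>auto simp: sp borel_open\<close>)
    also have "measure \<pi> (UNIV \<times> U) = measure \<tau> U"
    proof -
      have "measure \<tau> U = measure (distr \<pi> borel snd) U" using ds by simp
      also have "\<dots> = measure \<pi> (snd -` U \<inter> space \<pi>)"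
        using U by (intro measure_distr) (auto simp: mc borel_open)
      also have "snd -` U \<inter> space \<pi> = UNIV \<times> U" using spp by auto
      finally show ?thesis by simp
    qed
    finally show "a < measure \<tau> U" using mS unfolding \<eta>_def by simp
  qed
qed

lemma space_PpM: "space (PpM p) = Pp p"
  unfolding PpM_def by (rule space_measure_of) (auto simp: W_open_def)

lemma sets_PpM_W_open: "W_open p U \<Longrightarrow> U \<in> sets (PpM p)"
  unfolding PpM_def by (subst sets_measure_of) (auto simp: W_open_def)

lemma emeasure_open_meas:
  fixes U :: "'a::polish_space set"
  assumes U: "open U" and p: "1 \<le> p"
  shows "(\<lambda>\<sigma>. emeasure \<sigma> U) \<in> borel_measurable (PpM p)"
proof -
  have hr: "(\<lambda>\<sigma>. measure \<sigma> U) \<in> borel_measurable (PpM p)"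
    unfolding borel_measurable_iff_greater
  proof
    fix a
    have "W_open p {\<sigma> \<in> Pp p. a < measure \<sigma> U}"
      unfolding W_open_def using lsc[OF U p] by blast
    thus "{w \<in> space (PpM p). a < measure w U} \<in> sets (PpM p)"
      unfolding space_PpM by (rule sets_PpM_W_open)
  qed
  hence "(\<lambda>\<sigma>. ennreal (measure \<sigma> U)) \<in> borel_measurable (PpM p)" by measurable
  moreover have e: "\<And>\<sigma>. \<sigma> \<in> space (PpM p) \<Longrightarrow> ennreal (measure \<sigma> U) = emeasure \<sigma> U"
  proof -
    fix \<sigma> :: "'a measure" assume "\<sigma> \<in> space (PpM p)"
    hence "prob_space \<sigma>" unfolding space_PpM Pp_def by auto
    then interpret prob_space \<sigma> .
    show "ennreal (measure \<sigma> U) = emeasure \<sigma> U" by (simp add: emeasure_eq_measure)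
  qed
  moreover have "(\<lambda>\<sigma>. ennreal (measure \<sigma> U)) \<in> borel_measurable (PpM p) \<longleftrightarrow> (\<lambda>\<sigma>. emeasure \<sigma> U) \<in> borel_measurable (PpM p)"
    by (rule measurable_cong) (erule e)
  ultimately show ?thesis by blast
qed

lemma id_kernel:
  assumes p: "1 \<le> p"
  shows "(\<lambda>\<sigma>. \<sigma>) \<in> measurable (PpM p) (subprob_algebra (borel :: 'a::polish_space measure))"
proof (rule measurable_subprob_algebra_generated[where \<Omega> = "UNIV :: 'a set" and G = "{S :: 'a set. open S}" and K = "\<lambda>\<sigma>::'a measure. \<sigma>" and N = "borel :: 'a measure" and M = "PpM p"])
  show "sets (borel :: 'a measure) = sigma_sets UNIV {S. open S}" by (rule sets_borel)
  show "Int_stable {S :: 'a set. open S}" by (auto simp: Int_stable_def)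
  show "{S :: 'a set. open S} \<subseteq> Pow UNIV" by simp
  fix a :: "'a measure" assume "a \<in> space (PpM p)"
  hence a: "a \<in> Pp p" by (simp add: space_PpM)
  thus "subprob_space a" by (auto simp: Pp_def intro: prob_space_imp_subprob_space)
  show "sets a = sets borel" using a by (simp add: Pp_def)
next
  fix A :: "'a set" assume "A \<in> {S. open S}"
  thus "(\<lambda>a. emeasure a A) \<in> borel_measurable (PpM p)" using emeasure_open_meas p by auto
next
  have c1: "(\<lambda>a::'a measure. 1::ennreal) \<in> borel_measurable (PpM p)" by simp
  have e: "\<And>a::'a measure. a \<in> space (PpM p) \<Longrightarrow> 1 = emeasure a (UNIV :: 'a set)"
  proof -
    fix a :: "'a measure" assume "a \<in> space (PpM p)"
    hence "sets a = sets borel" "prob_space a" by (auto simp: space_PpM Pp_def)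
    moreover hence "space a = UNIV" using sets_eq_imp_space_eq[of a borel] by simp
    ultimately show "1 = emeasure a (UNIV :: 'a set)" by (metis prob_space.emeasure_space_1)
  qed
  show "(\<lambda>a. emeasure a (UNIV :: 'a set)) \<in> borel_measurable (PpM p)"
  proof -
    have "(\<lambda>a::'a measure. 1::ennreal) \<in> borel_measurable (PpM p) \<longleftrightarrow> (\<lambda>a::'a measure. emeasure a (UNIV :: 'a set)) \<in> borel_measurable (PpM p)"
      by (rule measurable_cong) (erule e)
    thus ?thesis using c1 by blast
  qed
qed

lemma lift_emeasure:
  assumes meas: "m \<in> borel \<rightarrow>\<^sub>M PpM p" and s: "\<sigma> \<in> space (PpM p)" and A: "A \<in> sets (PpM p)"
  shows "emeasure (lift_walk p m \<sigma>) A = emeasure \<sigma> (m -` A)"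
proof -
  have ss: "sets \<sigma> = sets borel" using s by (simp add: space_PpM Pp_def)
  have sp: "space \<sigma> = UNIV" using sets_eq_imp_space_eq[OF ss] by simp
  have mm: "m \<in> measurable \<sigma> (PpM p)" by (subst measurable_cong_sets[OF ss refl]) (rule meas)
  show ?thesis unfolding lift_walk_def using emeasure_distr[OF mm A] sp by simp
qed

theorem proposition4p1:
  fixes p :: real
    and m :: "'a::polish_space \<Rightarrow> 'a measure"
    and \<nu> :: "'a measure"
  assumes p: "1 \<le> p"
    and walk: "\<And>x. m x \<in> Pp p"
    and meas: "m \<in> borel \<rightarrow>\<^sub>M PpM p"
    and inv: "invariant_dist borel m \<nu>"
  shows "invariant_dist (PpM p) (lift_walk p m) (lift_walk p m \<nu>)
         \<and> (reversible borel m \<nu> \<longrightarrow> reversible (PpM p) (lift_walk p m) (lift_walk p m \<nu>))"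
proof -
  have p\<nu>: "prob_space \<nu>" and s\<nu>: "sets \<nu> = sets borel"
    and invA: "\<And>A. A \<in> sets borel \<Longrightarrow> (\<integral>\<^sup>+ y. emeasure (m y) A \<partial>\<nu>) = emeasure \<nu> A"
    using inv by (auto simp: invariant_dist_def)
  have sp\<nu>: "space \<nu> = UNIV" using sets_eq_imp_space_eq[OF s\<nu>] by simp
  have m\<nu>: "m \<in> measurable \<nu> (PpM p)" by (subst measurable_cong_sets[OF s\<nu> refl]) (rule meas)
  have K: "(\<lambda>\<sigma>. \<sigma>) \<in> measurable (PpM p) (subprob_algebra (borel :: 'a measure))" by (rule id_kernel[OF p])
  have mx: "m x \<in> space (PpM p)" for x using walk by (simp add: space_PpM)
  define \<nu>' where "\<nu>' = lift_walk p m \<nu>"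
  have \<nu>'d: "\<nu>' = distr \<nu> (PpM p) m" unfolding \<nu>'_def lift_walk_def ..
  have sp\<nu>': "space \<nu>' = space (PpM p)" unfolding \<nu>'d by simp
  have Md: "f \<in> borel_measurable (distr \<nu> (PpM p) m)" if "f \<in> borel_measurable (PpM p)" for f :: "'a measure \<Rightarrow> ennreal"
    by (subst measurable_cong_sets[OF sets_distr refl]) (rule that)
  have part1: "invariant_dist (PpM p) (lift_walk p m) \<nu>'"
    unfolding invariant_dist_def
  proof (intro conjI ballI)
    show "prob_space \<nu>'" unfolding \<nu>'d using prob_space.prob_space_distr[OF p\<nu> m\<nu>] .
    show "sets \<nu>' = sets (PpM p)" unfolding \<nu>'d by simp
    fix A :: "'a measure set" assume A: "A \<in> sets (PpM p)"
    have B: "m -` A \<in> sets borel" using measurable_sets[OF meas A] by simp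
    have "(\<integral>\<^sup>+ \<sigma>. emeasure (lift_walk p m \<sigma>) A \<partial>\<nu>') = (\<integral>\<^sup>+ \<sigma>. emeasure \<sigma> (m -` A) \<partial>\<nu>')"
      by (rule nn_integral_cong) (simp add: sp\<nu>' lift_emeasure[OF meas _ A])
    also have "\<dots> = (\<integral>\<^sup>+ x. emeasure (m x) (m -` A) \<partial>\<nu>)"
      unfolding \<nu>'d by (rule nn_integral_distr[OF m\<nu> Md[OF measurable_emeasure_kernel[OF K B]]])
    also have "\<dots> = emeasure \<nu> (m -` A)" by (rule invA[OF B])
    also have "\<dots> = emeasure \<nu>' A" unfolding \<nu>'d using emeasure_distr[OF m\<nu> A] sp\<nu> by simp
    finally show "(\<integral>\<^sup>+ \<sigma>. emeasure (lift_walk p m \<sigma>) A \<partial>\<nu>') = emeasure \<nu>' A" .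
  qed
  have part2: "reversible (PpM p) (lift_walk p m) \<nu>'" if rev: "reversible borel m \<nu>"
    unfolding reversible_def
  proof
    fix C :: "('a measure \<times> 'a measure) set" assume C: "C \<in> sets (PpM p \<Otimes>\<^sub>M PpM p)"
    define C' where "C' = (\<lambda>z. (m (fst z), m (snd z))) -` C \<inter> space (borel \<Otimes>\<^sub>M borel)"
    have mC': "(\<lambda>z::'a \<times> 'a. (m (fst z), m (snd z))) \<in> measurable (borel \<Otimes>\<^sub>M borel) (PpM p \<Otimes>\<^sub>M PpM p)"
      using meas by measurable
    have C'sets: "C' \<in> sets (borel \<Otimes>\<^sub>M borel)" unfolding C'_def using measurable_sets[OF mC' C] .
    have C'eq: "C' = {z. (m (fst z), m (snd z)) \<in> C}" unfolding C'_def by (auto simp: space_pair_measure)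
    have R: "(\<integral>\<^sup>+ x. emeasure (m x) {y. (x, y) \<in> C'} \<partial>\<nu>) = (\<integral>\<^sup>+ y. emeasure (m y) {x. (x, y) \<in> C'} \<partial>\<nu>)"
      using rev C'sets unfolding reversible_def by blast
    have m1: "(\<lambda>z::'a measure \<times> 'a. (fst z, m (snd z))) \<in> measurable (PpM p \<Otimes>\<^sub>M borel) (PpM p \<Otimes>\<^sub>M PpM p)"
      using meas by measurable
    have S1: "(SIGMA \<sigma>:space (PpM p). {y. (\<sigma>, m y) \<in> C}) \<in> sets (PpM p \<Otimes>\<^sub>M borel)"
    proof -
      have "(SIGMA \<sigma>:space (PpM p). {y. (\<sigma>, m y) \<in> C}) = (\<lambda>z. (fst z, m (snd z))) -` C \<inter> space (PpM p \<Otimes>\<^sub>M borel)"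
        by (auto simp: space_pair_measure)
      thus ?thesis using measurable_sets[OF m1 C] by simp
    qed
    have L1: "(\<lambda>\<sigma>. emeasure \<sigma> {y. (\<sigma>, m y) \<in> C}) \<in> borel_measurable (PpM p)"
      using emeasure_measurable_subprob_algebra2[OF S1 K] by simp
    have "(\<integral>\<^sup>+ \<sigma>. emeasure (lift_walk p m \<sigma>) {\<tau>. (\<sigma>, \<tau>) \<in> C} \<partial>\<nu>') = (\<integral>\<^sup>+ \<sigma>. emeasure \<sigma> {y. (\<sigma>, m y) \<in> C} \<partial>\<nu>')"
    proof (rule nn_integral_cong)
      fix \<sigma> assume s: "\<sigma> \<in> space \<nu>'"
      have "{\<tau>. (\<sigma>, \<tau>) \<in> C} = Pair \<sigma> -` C" by auto
      hence "{\<tau>. (\<sigma>, \<tau>) \<in> C} \<in> sets (PpM p)" using sets_Pair1[OF C] by simp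
      from lift_emeasure[OF meas _ this] s sp\<nu>'
      show "emeasure (lift_walk p m \<sigma>) {\<tau>. (\<sigma>, \<tau>) \<in> C} = emeasure \<sigma> {y. (\<sigma>, m y) \<in> C}"
        by (simp add: vimage_def)
    qed
    also have "\<dots> = (\<integral>\<^sup>+ x. emeasure (m x) {y. (m x, m y) \<in> C} \<partial>\<nu>)"
      unfolding \<nu>'d using nn_integral_distr[OF m\<nu> Md[OF L1]] by simp
    also have "\<dots> = (\<integral>\<^sup>+ x. emeasure (m x) {y. (x, y) \<in> C'} \<partial>\<nu>)" unfolding C'eq by simp
    also have "\<dots> = (\<integral>\<^sup>+ y. emeasure (m y) {x. (x, y) \<in> C'} \<partial>\<nu>)" by (rule R)
    also have "\<dots> = (\<integral>\<^sup>+ y. emeasure (m y) {x. (m x, m y) \<in> C} \<partial>\<nu>)" unfolding C'eq by simp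
    also have "\<dots> = (\<integral>\<^sup>+ \<tau>. emeasure (lift_walk p m \<tau>) {\<sigma>. (\<sigma>, \<tau>) \<in> C} \<partial>\<nu>')"
    proof -
      have m2: "(\<lambda>z::'a measure \<times> 'a. (m (snd z), fst z)) \<in> measurable (PpM p \<Otimes>\<^sub>M borel) (PpM p \<Otimes>\<^sub>M PpM p)"
        using meas by measurable
      have S2: "(SIGMA \<tau>:space (PpM p). {x. (m x, \<tau>) \<in> C}) \<in> sets (PpM p \<Otimes>\<^sub>M borel)"
      proof -
        have "(SIGMA \<tau>:space (PpM p). {x. (m x, \<tau>) \<in> C}) = (\<lambda>z. (m (snd z), fst z)) -` C \<inter> space (PpM p \<Otimes>\<^sub>M borel)"
          by (auto simp: space_pair_measure)
        thus ?thesis using measurable_sets[OF m2 C] by simp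
      qed
      have L2: "(\<lambda>\<tau>. emeasure \<tau> {x. (m x, \<tau>) \<in> C}) \<in> borel_measurable (PpM p)"
        using emeasure_measurable_subprob_algebra2[OF S2 K] by simp
      have "(\<integral>\<^sup>+ y. emeasure (m y) {x. (m x, m y) \<in> C} \<partial>\<nu>) = (\<integral>\<^sup>+ \<tau>. emeasure \<tau> {x. (m x, \<tau>) \<in> C} \<partial>\<nu>')"
        unfolding \<nu>'d using nn_integral_distr[OF m\<nu> Md[OF L2]] by simp
      also have "\<dots> = (\<integral>\<^sup>+ \<tau>. emeasure (lift_walk p m \<tau>) {\<sigma>. (\<sigma>, \<tau>) \<in> C} \<partial>\<nu>')"
      proof (rule nn_integral_cong)
        fix \<tau> assume s: "\<tau> \<in> space \<nu>'"
        have "{\<sigma>. (\<sigma>, \<tau>) \<in> C} = (\<lambda>\<sigma>. (\<sigma>, \<tau>)) -` C" by auto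
        hence "{\<sigma>. (\<sigma>, \<tau>) \<in> C} \<in> sets (PpM p)" using sets_Pair2[OF C] by simp
        from lift_emeasure[OF meas _ this] s sp\<nu>'
        show "emeasure \<tau> {x. (m x, \<tau>) \<in> C} = emeasure (lift_walk p m \<tau>) {\<sigma>. (\<sigma>, \<tau>) \<in> C}"
          by (simp add: vimage_def)
      qed
      finally show ?thesis .
    qed
    finally show "(\<integral>\<^sup>+ \<sigma>. emeasure (lift_walk p m \<sigma>) {\<tau>. (\<sigma>, \<tau>) \<in> C} \<partial>\<nu>') =
                  (\<integral>\<^sup>+ \<tau>. emeasure (lift_walk p m \<tau>) {\<sigma>. (\<sigma>, \<tau>) \<in> C} \<partial>\<nu>')" .
  qed
  show ?thesis using part1 part2 unfolding \<nu>'_def by blast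
qed

end
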